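(* Let $(\Omega,\mu)$ be a measure space with $\mu$ a continuous measure (i.e., without point masses), and let $(u_k)_{k\geq 1}$ be a frame in $L^2_{\mathbb R}(\Omega,\mu)$. Then $$\sum_{k}(u_k^+(x))^2=\sum_k (u_k^-(x))^2=\infty\quad\text{for }\mu\text{-almost every }x\in\Omega.$$ In particular, there exist no positive frames (nor positive Riesz bases) in $L^2_{\mathbb R}(\Omega,\mu)$.
   Context: $L^2_{\mathbb R}(\Omega,\mu)$ is the Lebesgue space of real-valued square-integrable functions. A sequence $(u_k)_{k\ge1}$ in it is a frame if there exist constants $A>0$, $B>0$ with $A\|f\|^2\le\sum_{k\ge1}|(f,u_k)|^2\le B\|f\|^2$ for all $f\in L^2_{\mathbb R}(\Omega,\mu)$. For a real function $u$, $u^{\pm}(x)=\max(0,\pm u(x))$ denote its positive and negative parts. *)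

theory Defs
  imports "HOL-Analysis.Analysis"
begin

definition L2R :: "'a measure \<Rightarrow> ('a \<Rightarrow> real) set" where
  "L2R M = {f. f \<in> borel_measurable M \<and> integrable M (\<lambda>x. (f x)\<^sup>2)}"

definition L2_inner :: "'a measure \<Rightarrow> ('a \<Rightarrow> real) \<Rightarrow> ('a \<Rightarrow> real) \<Rightarrow> real" where
  "L2_inner M f g = (\<integral>x. f x * g x \<partial>M)"

definition L2_normsq :: "'a measure \<Rightarrow> ('a \<Rightarrow> real) \<Rightarrow> real" where
  "L2_normsq M f = (\<integral>x. (f x)\<^sup>2 \<partial>M)"

text \<open>Frame in L^2_R(M), indexed by nat (k = 0,1,2,... instead of k >= 1).\<close>
definition is_frame :: "'a measure \<Rightarrow> (nat \<Rightarrow> 'a \<Rightarrow> real) \<Rightarrow> bool" where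
  "is_frame M u \<longleftrightarrow> (\<forall>k. u k \<in> L2R M) \<and>
     (\<exists>A B. A > 0 \<and> B > 0 \<and> (\<forall>f \<in> L2R M.
        summable (\<lambda>k. \<bar>L2_inner M f (u k)\<bar>\<^sup>2) \<and>
        A * L2_normsq M f \<le> (\<Sum>k. \<bar>L2_inner M f (u k)\<bar>\<^sup>2) \<and>
        (\<Sum>k. \<bar>L2_inner M f (u k)\<bar>\<^sup>2) \<le> B * L2_normsq M f))"

text \<open>Continuous (atomless) measure: every set of positive measure contains a
  measurable subset of strictly smaller positive measure.\<close>
definition atomless :: "'a measure \<Rightarrow> bool" where
  "atomless M \<longleftrightarrow> (\<forall>A \<in> sets M. emeasure M A > 0 \<longrightarrow>
      (\<exists>B \<in> sets M. B \<subseteq> A \<and> 0 < emeasure M B \<and> emeasure M B < emeasure M A))"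

definition pos_part :: "('a \<Rightarrow> real) \<Rightarrow> 'a \<Rightarrow> real" where
  "pos_part u x = max 0 (u x)"

definition neg_part :: "('a \<Rightarrow> real) \<Rightarrow> 'a \<Rightarrow> real" where
  "neg_part u x = max 0 (- u x)"

end

theory Submission
  imports Defs
begin

lemma atomless_split:
  assumes "atomless M" "A \<in> fmeasurable M" "0 < measure M A"
  shows "\<exists>B\<in>fmeasurable M. B \<subseteq> A \<and> 0 < measure M B \<and> measure M B \<le> measure M A / 2"
proof -
  have "0 < emeasure M A" using assms(2,3) by (simp add: emeasure_eq_measure2)
  then obtain C where C: "C \<in> sets M" "C \<subseteq> A" "0 < emeasure M C" "emeasure M C < emeasure M A"
    using assms(1,2) unfolding atomless_def fmeasurable_def by blast
  have Cf: "C \<in> fmeasurable M" using C assms(2) by (meson fmeasurableD2 fmeasurableI2)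
  have mC: "0 < measure M C" "measure M C < measure M A"
    using C Cf assms(2) by (simp_all add: emeasure_eq_measure2 ennreal_less_iff)
  show ?thesis
  proof (cases "measure M C \<le> measure M A / 2")
    case True then show ?thesis 
      using Cf C mC by (intro bexI[of _ C] conjI) 
  next
    case False
    have D: "A - C \<in> fmeasurable M" using C(1) assms(2) by (rule fmeasurable_Diff[rotated])
    have "measure M (A - C) = measure M A - measure M C"
      using assms(2) C Cf by (intro measure_Diff) (auto simp: fmeasurable_def less_top)
    then have h: "0 < measure M (A - C)" "measure M (A - C) \<le> measure M A / 2" using False mC by linarith+
    have "A - C \<subseteq> A" by (rule Diff_subset)
    then show ?thesis using D h by (intro bexI[of _ "A - C"] conjI)
  qed
qed

lemma atomless_small:
  assumes "atomless M" "A \<in> fmeasurable M" "0 < measure M A" "0 < e"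
  shows "\<exists>B\<in>fmeasurable M. B \<subseteq> A \<and> 0 < measure M B \<and> measure M B \<le> e"
proof -
  have *: "\<exists>B\<in>fmeasurable M. B \<subseteq> A \<and> 0 < measure M B \<and> measure M B \<le> measure M A / 2^n" for n
  proof (induction n)
    case 0 then show ?case using assms(2,3) by (intro bexI[of _ A] conjI) auto
  next
    case (Suc n)
    then obtain B where B: "B\<in>fmeasurable M" "B \<subseteq> A" "0 < measure M B" "measure M B \<le> measure M A / 2^n" by blast
    from atomless_split[OF assms(1) B(1,3)] obtain C where
      C: "C\<in>fmeasurable M" "C \<subseteq> B" "0 < measure M C" "measure M C \<le> measure M B / 2" by blast
    have "measure M B / 2 \<le> measure M A / 2^Suc n" using B(4) by (simp add: field_simps)
    then have "measure M C \<le> measure M A / 2^Suc n" using C(4) by linarith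
    moreover have "C \<subseteq> A" using C(2) B(2) by (rule order_trans)
    ultimately show ?case using C(1,3) by (intro bexI[of _ C] conjI)
  qed
  obtain n :: nat where n: "measure M A / e < 2^n"
    using real_arch_pow[of 2 "measure M A / e"] by auto
  have "measure M A < e * 2^n" using n assms(4) by (simp add: divide_less_eq mult.commute)
  then have "measure M A / 2^n < e" by (simp add: divide_less_eq)
  then show ?thesis using *[of n] by (meson less_imp_le order_trans)
qed

lemma atomless_half:
  assumes atl: "atomless M" and Af: "A \<in> fmeasurable M"
  shows "\<exists>S\<in>fmeasurable M. S \<subseteq> A \<and> measure M S = measure M A / 2"
proof -
  define t where "t = measure M A / 2"
  have t0: "0 \<le> t" unfolding t_def by simp
  have Asets: "A \<in> sets M" using Af by auto
  have fsub: "B \<in> fmeasurable M" if "B \<in> sets M" "B \<subseteq> A" for B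
    by (rule fmeasurableI2[OF Af that(2,1)])
  have fin: "emeasure M B \<noteq> \<infinity>" if "B \<in> sets M" "B \<subseteq> A" for B
    using fmeasurableD2[OF fsub[OF that]] by simp
  define adm where "adm T B \<longleftrightarrow> B \<in> sets M \<and> B \<subseteq> A - T \<and> measure M T + measure M B \<le> t" for T B
  define gap where "gap T = Sup {measure M B | B. adm T B}" for T
  have gap_upper: "measure M B \<le> gap T" if "adm T B" "T \<in> sets M" for T B
    unfolding gap_def
  proof (rule cSup_upper)
    show "measure M B \<in> {measure M B |B. adm T B}" using that by blast
    show "bdd_above {measure M B |B. adm T B}"
    proof (rule bdd_aboveI)
      fix x assume "x \<in> {measure M B |B. adm T B}"
      then obtain B' where "x = measure M B'" "adm T B'" by blast
      then show "x \<le> t" unfolding adm_def using measure_nonneg[of M T] by linarith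
    qed
  qed
  have step_ex: "\<exists>B. adm T B \<and> gap T \<le> 2 * measure M B"
    if T: "T \<in> sets M" "T \<subseteq> A" "measure M T \<le> t" for T
  proof (cases "gap T \<le> 0")
    case True
    have "adm T {}" unfolding adm_def using T by simp
    then show ?thesis using True by (intro exI[of _ "{}"]) simp
  next
    case False
    have ne: "{measure M B |B. adm T B} \<noteq> {}"
    proof -
      have "adm T {}" unfolding adm_def using T by simp
      then show ?thesis by blast
    qed
    have "gap T / 2 < Sup {measure M B |B. adm T B}" using False unfolding gap_def by simp
    then obtain x where "x \<in> {measure M B |B. adm T B}" "gap T / 2 < x"
      using less_cSupE[OF _ ne] by blast
    then obtain B where "adm T B" "gap T / 2 < measure M B" by blast
    then show ?thesis by (intro exI[of _ B]) simp
  qed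
  define step where "step T = (SOME B. adm T B \<and> gap T \<le> 2 * measure M B)" for T
  have step: "adm T (step T) \<and> gap T \<le> 2 * measure M (step T)"
    if "T \<in> sets M" "T \<subseteq> A" "measure M T \<le> t" for T
    unfolding step_def by (rule someI_ex[OF step_ex[OF that]])
  define S where "S = rec_nat {} (\<lambda>_ T. T \<union> step T)"
  have S0: "S 0 = {}" and SS: "S (Suc n) = S n \<union> step (S n)" for n
    unfolding S_def by simp_all
  have inv: "S n \<in> sets M \<and> S n \<subseteq> A \<and> measure M (S n) \<le> t" for n
  proof (induction n)
    case 0 then show ?case using S0 t0 by simp
  next
    case (Suc n)
    then have st: "adm (S n) (step (S n))" using step by blast
    then have sts: "step (S n) \<in> sets M" "step (S n) \<subseteq> A - S n"
      "measure M (S n) + measure M (step (S n)) \<le> t" unfolding adm_def by auto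
    have "measure M (S n \<union> step (S n)) = measure M (S n) + measure M (step (S n))"
      using Suc sts by (intro measure_Union fin) auto
    then show ?case using Suc sts unfolding SS by auto
  qed
  have Sf: "S n \<in> fmeasurable M" for n using inv fsub by blast
  have stepf: "adm (S n) (step (S n))" "gap (S n) \<le> 2 * measure M (step (S n))" for n
    using step inv by blast+
  have mSS: "measure M (S (Suc n)) = measure M (S n) + measure M (step (S n))" for n
  proof -
    have sts: "step (S n) \<in> sets M" "step (S n) \<subseteq> A - S n" using stepf(1)[of n] unfolding adm_def by auto
    then show ?thesis unfolding SS using inv[of n]
      by (intro measure_Union fin) auto
  qed
  have inc: "incseq S" by (rule incseq_SucI) (simp add: SS)
  define U where "U = (\<Union>n. S n)"
  have Usets: "U \<in> sets M" unfolding U_def using inv by blast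
  have UA: "U \<subseteq> A" unfolding U_def using inv by blast
  have Uf: "U \<in> fmeasurable M" using fsub Usets UA by blast
  have lim: "(\<lambda>n. measure M (S n)) \<longlonglongrightarrow> measure M U"
    unfolding U_def using inv inc Uf[unfolded U_def]
    by (intro Lim_measure_incseq) (auto simp: fmeasurableD2)
  have Ule: "measure M U \<le> t"
    by (rule LIMSEQ_le_const2[OF lim]) (use inv in blast)
  have lim2: "(\<lambda>n. measure M (step (S n))) \<longlonglongrightarrow> 0"
  proof -
    have "(\<lambda>n. measure M (S (Suc n)) - measure M (S n)) \<longlonglongrightarrow> measure M U - measure M U"
      using lim LIMSEQ_Suc[OF lim] by (intro tendsto_diff) simp_all
    then show ?thesis using mSS by simp
  qed
  have SU: "S n \<subseteq> U" for n unfolding U_def by blast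
  have "measure M U = t"
  proof (rule ccontr)
    assume "measure M U \<noteq> t"
    then have lt: "measure M U < t" using Ule by simp
    have Df: "A - U \<in> fmeasurable M" using Usets Af by (rule fmeasurable_Diff[rotated])
    have "measure M (A - U) = measure M A - measure M U"
      using Af Usets UA by (intro measure_Diff) (auto simp: fmeasurable_def less_top)
    then have "0 < measure M (A - U)" using lt measure_nonneg[of M U] unfolding t_def by linarith
    then obtain B where B: "B \<in> fmeasurable M" "B \<subseteq> A - U" "0 < measure M B" "measure M B \<le> t - measure M U"
      using atomless_small[OF atl Df, of "t - measure M U"] lt by auto
    have "measure M B \<le> 2 * measure M (step (S n))" for n
    proof -
      have "measure M (S n) \<le> measure M U" using SU Uf inv by (intro measure_mono_fmeasurable) auto
      then have "adm (S n) B" unfolding adm_def using B SU[of n] by auto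
      then have "measure M B \<le> gap (S n)" using gap_upper inv by blast
      then show ?thesis using stepf(2)[of n] by linarith
    qed
    moreover have "(\<lambda>n. 2 * measure M (step (S n))) \<longlonglongrightarrow> 0"
      using tendsto_mult_right_zero[OF lim2, of 2] by simp
    ultimately have "measure M B \<le> 0"
      by (intro LIMSEQ_le_const[of "\<lambda>n. 2 * measure M (step (S n))"]) auto
    then show False using B(3) by simp
  qed
  then show ?thesis using Uf UA unfolding t_def by (intro bexI[of _ U] conjI)
qed

lemma atomless_half_family:
  assumes atl: "atomless M" and V: "finite V" and L: "\<And>v. v \<in> V \<Longrightarrow> L v \<in> fmeasurable M"
    and dj: "disjoint_family_on L V"
  shows "\<exists>S\<in>sets M. S \<subseteq> (\<Union>v\<in>V. L v) \<and> (\<forall>v\<in>V. measure M (S \<inter> L v) = measure M (L v) / 2)"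
proof -
  have "\<forall>v\<in>V. \<exists>H. H \<in> fmeasurable M \<and> H \<subseteq> L v \<and> measure M H = measure M (L v) / 2"
    using atomless_half[OF atl L] by blast
  from bchoice[OF this] obtain H where H0: "\<forall>v\<in>V. H v \<in> fmeasurable M \<and> H v \<subseteq> L v \<and> measure M (H v) = measure M (L v) / 2"
    by (elim exE)
  then have H: "\<And>v. v \<in> V \<Longrightarrow> H v \<in> fmeasurable M \<and> H v \<subseteq> L v \<and> measure M (H v) = measure M (L v) / 2"
    by blast
  define S where "S = (\<Union>v\<in>V. H v)"
  have Ss: "S \<in> sets M" unfolding S_def using V H by (intro sets.finite_UN) auto
  have Ssub: "S \<subseteq> (\<Union>v\<in>V. L v)" unfolding S_def using H by blast
  have "S \<inter> L v = H v" if v: "v \<in> V" for v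
  proof
    show "H v \<subseteq> S \<inter> L v" unfolding S_def using H[OF v] v by blast
    show "S \<inter> L v \<subseteq> H v"
    proof
      fix x assume x: "x \<in> S \<inter> L v"
      then obtain w where w: "w \<in> V" "x \<in> H w" unfolding S_def by blast
      then have "x \<in> L w" using H by blast
      then have "w = v" using dj w(1) v x unfolding disjoint_family_on_def by blast
      then show "x \<in> H v" using w by simp
    qed
  qed
  then show ?thesis using Ss Ssub H by (intro bexI[of _ S] conjI) auto
qed

lemma simple_approx:
  fixes g :: "'a \<Rightarrow> real"
  assumes g: "integrable M g" and e: "0 < e"
  shows "\<exists>s. simple_function M s \<and> integrable M s \<and> (\<integral>x. \<bar>g x - s x\<bar> \<partial>M) < e"
proof -
  from g obtain y where "has_bochner_integral M g y" unfolding integrable.simps by blast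
  then obtain s where s: "\<And>i. Bochner_Integration.simple_bochner_integrable M (s i)"
    and lim: "(\<lambda>i. \<integral>\<^sup>+x. norm (g x - s i x) \<partial>M) \<longlonglongrightarrow> 0"
    by (cases rule: has_bochner_integral.cases) blast
  have "eventually (\<lambda>i. (\<integral>\<^sup>+x. norm (g x - s i x) \<partial>M) < ennreal e) sequentially"
    using lim e by (intro order_tendstoD(2)) auto
  then obtain N where "\<forall>n\<ge>N. (\<integral>\<^sup>+x. norm (g x - s n x) \<partial>M) < ennreal e"
    unfolding eventually_sequentially by blast
  then obtain i where i: "(\<integral>\<^sup>+x. norm (g x - s i x) \<partial>M) < ennreal e"
    by blast
  have sf: "simple_function M (s i)" using s[of i] by (cases rule: Bochner_Integration.simple_bochner_integrable.cases)
  have si: "integrable M (s i)"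
    using has_bochner_integral_simple_bochner_integrable[OF s[of i]] by (rule integrable.intros)
  have di: "integrable M (\<lambda>x. \<bar>g x - s i x\<bar>)" by (intro integrable_abs Bochner_Integration.integrable_diff g si)
  have "ennreal (\<integral>x. \<bar>g x - s i x\<bar> \<partial>M) = (\<integral>\<^sup>+x. norm (g x - s i x) \<partial>M)"
    using di by (subst nn_integral_eq_integral) auto
  then have "ennreal (\<integral>x. \<bar>g x - s i x\<bar> \<partial>M) < ennreal e" using i by simp
  then have "(\<integral>x. \<bar>g x - s i x\<bar> \<partial>M) < e"
    by (subst (asm) ennreal_less_iff) auto
  then show ?thesis using sf si by blast
qed

lemma approx_orth:
  fixes g :: "nat \<Rightarrow> 'a \<Rightarrow> real"
  assumes atl: "atomless M" and Ff: "F \<in> fmeasurable M"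
    and g: "\<And>k. k < K \<Longrightarrow> integrable M (g k)" and e: "0 < e"
  shows "\<exists>S\<in>sets M. S \<subseteq> F \<and> (\<forall>k<K. \<bar>\<integral>x. (indicator F x - 2 * indicator S x) * g k x \<partial>M\<bar> \<le> e)"
proof -
  have "\<forall>k\<in>{..<K}. \<exists>s. simple_function M s \<and> integrable M s \<and> (\<integral>x. \<bar>g k x - s x\<bar> \<partial>M) < e"
    using simple_approx g e by blast
  from bchoice[OF this] obtain s where s0: "\<forall>k\<in>{..<K}. simple_function M (s k) \<and> integrable M (s k) \<and> (\<integral>x. \<bar>g k x - s k x\<bar> \<partial>M) < e"
    by (elim exE)
  then have sf: "\<And>k. k < K \<Longrightarrow> simple_function M (s k)"
    and si: "\<And>k. k < K \<Longrightarrow> integrable M (s k)"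
    and sa: "\<And>k. k < K \<Longrightarrow> (\<integral>x. \<bar>g k x - s k x\<bar> \<partial>M) < e" by auto
  have Fs: "F \<in> sets M" using Ff by auto
  have Fsp: "F \<subseteq> space M" using sets.sets_into_space[OF Fs] .
  define H where "H x = restrict (\<lambda>k. s k x) {..<K}" for x
  define V where "V = H ` F"
  have "V \<subseteq> PiE {..<K} (\<lambda>k. s k ` space M)"
  proof (rule subsetI)
    fix y assume "y \<in> V"
    then obtain x where x: "x \<in> F" "y = H x" unfolding V_def by blast
    have "H x \<in> PiE {..<K} (\<lambda>k. s k ` space M)" unfolding H_def
      by (rule iffD2[OF restrict_PiE_iff]) (use x Fsp in blast)
    then show "y \<in> PiE {..<K} (\<lambda>k. s k ` space M)" using x by simp
  qed
  moreover have "finite (PiE {..<K} (\<lambda>k. s k ` space M))"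
    using sf by (intro finite_PiE) (auto intro: simple_functionD(1))
  ultimately have finV: "finite V" by (rule finite_subset)
  have Heq: "H x = H y \<longleftrightarrow> (\<forall>k\<in>{..<K}. s k x = s k y)" for x y
    unfolding H_def by (auto simp: fun_eq_iff restrict_def)
  define L where "L v = {x\<in>space M. x \<in> F \<and> (\<forall>k\<in>{..<K}. s k x = v k)}" for v
  have Lsets: "L v \<in> sets M" for v
  proof -
    have "{x\<in>space M. \<forall>k\<in>{..<K}. s k x = v k} \<in> sets M"
    proof (rule sets.sets_Collect_finite_All)
      fix k assume "k \<in> {..<K}"
      then have "s k -` {v k} \<inter> space M \<in> sets M" using sf by (auto intro: simple_functionD(2))
      moreover have "{x \<in> space M. s k x = v k} = s k -` {v k} \<inter> space M" by auto
      ultimately show "{x \<in> space M. s k x = v k} \<in> sets M" by simp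
    qed simp
    moreover have "L v = F \<inter> {x\<in>space M. \<forall>k\<in>{..<K}. s k x = v k}" unfolding L_def by auto
    ultimately show ?thesis using Fs by auto
  qed
  have LF: "L v \<subseteq> F" for v unfolding L_def by auto
  have Lf: "L v \<in> fmeasurable M" for v by (rule fmeasurableI2[OF Ff LF Lsets])
  have Lx: "x \<in> L v \<longleftrightarrow> v = H x" if xF: "x \<in> F" and vV: "v \<in> V" for x v
  proof -
    obtain y where y: "v = H y" using vV unfolding V_def by blast
    have "x \<in> L v \<longleftrightarrow> (\<forall>k\<in>{..<K}. s k x = s k y)"
      unfolding L_def y H_def using xF Fsp by auto
    also have "\<dots> \<longleftrightarrow> v = H x" unfolding y using Heq[of y x] by auto
    finally show ?thesis .
  qed
  have dj: "disjoint_family_on L V"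
    unfolding disjoint_family_on_def
  proof (intro ballI impI)
    fix v w assume vw: "v \<in> V" "w \<in> V" "v \<noteq> w"
    show "L v \<inter> L w = {}"
    proof (rule ccontr)
      assume "L v \<inter> L w \<noteq> {}"
      then obtain x where x: "x \<in> L v" "x \<in> L w" by blast
      then have "x \<in> F" using LF by blast
      then show False using Lx x vw by blast
    qed
  qed
  obtain S where S: "S \<in> sets M" "S \<subseteq> (\<Union>v\<in>V. L v)" "\<forall>v\<in>V. measure M (S \<inter> L v) = measure M (L v) / 2"
    using atomless_half_family[OF atl finV Lf dj] by blast
  have SF: "S \<subseteq> F" using S(2) LF by blast
  define r :: "'a \<Rightarrow> real" where "r x = indicator F x - 2 * indicator S x" for x
  have rm[measurable]: "r \<in> borel_measurable M" unfolding r_def using Fs S(1) by measurable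
  have rb: "\<bar>r x\<bar> \<le> 1" for x unfolding r_def using SF by (auto simp: indicator_def)
  have rabs: "\<bar>r x * y\<bar> \<le> \<bar>y\<bar>" for x y
    unfolding abs_mult by (rule mult_left_le_one_le) (use rb in auto)
  have key: "r x * s k x = (\<Sum>v\<in>V. v k * (indicator (L v) x - 2 * indicator (S \<inter> L v) x))"
    if k: "k < K" for k x
  proof (cases "x \<in> F")
    case True
    have "(\<Sum>v\<in>V. v k * (indicator (L v) x - 2 * indicator (S \<inter> L v) x))
        = (\<Sum>v\<in>V. if v = H x then v k * (1 - 2 * indicator S x) else 0)"
    proof (rule sum.cong[OF refl])
      fix v assume v: "v \<in> V"
      show "v k * (indicator (L v) x - 2 * indicator (S \<inter> L v) x) = (if v = H x then v k * (1 - 2 * indicator S x) else 0)"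
        using Lx[OF True v] by (auto simp: indicator_def)
    qed
    also have "\<dots> = H x k * (1 - 2 * indicator S x)"
      using finV True unfolding V_def by simp
    also have "\<dots> = r x * s k x" unfolding r_def H_def using True k by simp
    finally show ?thesis by simp
  next
    case False
    then have "x \<notin> S" "\<And>v. x \<notin> L v" using SF LF by blast+
    then show ?thesis unfolding r_def using False by simp
  qed
  have orth: "(\<integral>x. r x * s k x \<partial>M) = 0" if k: "k < K" for k
  proof -
    have ind: "integrable M (indicator (L v) :: 'a \<Rightarrow> real)" "integrable M (indicator (S \<inter> L v) :: 'a \<Rightarrow> real)" for v
      using Lf[of v] S(1) fmeasurable_Int_fmeasurable[OF Lf[of v] S(1)]
      by (auto simp: fmeasurable_def Int_commute)
    have "(\<integral>x. r x * s k x \<partial>M) = (\<integral>x. (\<Sum>v\<in>V. v k * (indicator (L v) x - 2 * indicator (S \<inter> L v) x)) \<partial>M)"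
      using key[OF k] by simp
    also have "\<dots> = (\<Sum>v\<in>V. (\<integral>x. v k * (indicator (L v) x - 2 * indicator (S \<inter> L v) x) \<partial>M))"
      using ind by (intro Bochner_Integration.integral_sum) auto
    also have "\<dots> = (\<Sum>v\<in>V. v k * (measure M (L v) - 2 * measure M (S \<inter> L v)))"
    proof (rule sum.cong[OF refl])
      fix v assume "v \<in> V"
      have e1: "(\<integral>x. v k * (indicator (L v) x - 2 * indicator (S \<inter> L v) x) \<partial>M)
          = v k * (\<integral>x. indicator (L v) x - 2 * indicator (S \<inter> L v) x \<partial>M)"
        by (rule integral_mult_right_zero)
      have e2: "(\<integral>x. (indicator (L v) x :: real) - 2 * (indicator (S \<inter> L v) x :: real) \<partial>M)
          = (\<integral>x. (indicator (L v) x :: real) \<partial>M) - (\<integral>x. 2 * (indicator (S \<inter> L v) x :: real) \<partial>M)"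
        by (rule Bochner_Integration.integral_diff) (use ind in auto)
      have e3: "(\<integral>x. 2 * (indicator (S \<inter> L v) x :: real) \<partial>M) = 2 * (\<integral>x. (indicator (S \<inter> L v) x :: real) \<partial>M)"
        by (rule integral_mult_right_zero)
      have sp1: "L v \<inter> space M = L v" using sets.sets_into_space[OF Lsets[of v]] by blast
      have sp2: "S \<inter> L v \<inter> space M = S \<inter> L v" using sets.sets_into_space[OF Lsets[of v]] by blast
      have e4: "(\<integral>x. (indicator (L v) x :: real) \<partial>M) = measure M (L v)"
        using Bochner_Integration.integral_indicator[of M "L v"] sp1 by simp
      have e5: "(\<integral>x. (indicator (S \<inter> L v) x :: real) \<partial>M) = measure M (S \<inter> L v)"
        using Bochner_Integration.integral_indicator[of M "S \<inter> L v"] sp2 by simp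
      have "(\<integral>x. v k * (indicator (L v) x - 2 * indicator (S \<inter> L v) x) \<partial>M)
          = v k * (measure M (L v) - 2 * measure M (S \<inter> L v))"
        unfolding e1 e2 e3 e4 e5 ..
      then show "(\<integral>x. v k * (indicator (L v) x - 2 * indicator (S \<inter> L v) x) \<partial>M)
          = v k * (measure M (L v) - 2 * measure M (S \<inter> L v))" .
    qed
    also have "\<dots> = 0"
    proof (rule sum.neutral, rule ballI)
      fix v assume "v \<in> V"
      then have "measure M (S \<inter> L v) = measure M (L v) / 2" using S(3) by blast
      then show "v k * (measure M (L v) - 2 * measure M (S \<inter> L v)) = 0" by simp
    qed
    finally show ?thesis .
  qed
  have bound: "\<bar>\<integral>x. r x * g k x \<partial>M\<bar> \<le> e" if k: "k < K" for k
  proof -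
    have gm[measurable]: "g k \<in> borel_measurable M" using g[OF k] by auto
    have sm[measurable]: "s k \<in> borel_measurable M" using si[OF k] by auto
    have i1: "integrable M (\<lambda>x. r x * (g k x - s k x))"
    proof (rule Bochner_Integration.integrable_bound)
      show "integrable M (\<lambda>x. g k x - s k x)" using g[OF k] si[OF k] by auto
      show "(\<lambda>x. r x * (g k x - s k x)) \<in> borel_measurable M" by measurable
      show "AE x in M. norm (r x * (g k x - s k x)) \<le> norm (g k x - s k x)"
        using rabs by simp
    qed
    have i2: "integrable M (\<lambda>x. r x * s k x)"
    proof (rule Bochner_Integration.integrable_bound)
      show "integrable M (s k)" using si[OF k] .
      show "(\<lambda>x. r x * s k x) \<in> borel_measurable M" by measurable
      show "AE x in M. norm (r x * s k x) \<le> norm (s k x)"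
        using rabs by simp
    qed
    have "(\<integral>x. r x * g k x \<partial>M) = (\<integral>x. r x * (g k x - s k x) + r x * s k x \<partial>M)"
      by (simp add: algebra_simps)
    also have "\<dots> = (\<integral>x. r x * (g k x - s k x) \<partial>M) + (\<integral>x. r x * s k x \<partial>M)"
      using i1 i2 by (rule Bochner_Integration.integral_add)
    also have "\<dots> = (\<integral>x. r x * (g k x - s k x) \<partial>M)" using orth[OF k] by simp
    finally have "\<bar>\<integral>x. r x * g k x \<partial>M\<bar> = \<bar>\<integral>x. r x * (g k x - s k x) \<partial>M\<bar>" by simp
    also have "\<dots> \<le> (\<integral>x. \<bar>r x * (g k x - s k x)\<bar> \<partial>M)"
      using integral_abs_bound[of M "\<lambda>x. r x * (g k x - s k x)"] by simp
    also have "\<dots> \<le> (\<integral>x. \<bar>g k x - s k x\<bar> \<partial>M)"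
    proof (rule integral_mono)
      show "integrable M (\<lambda>x. \<bar>r x * (g k x - s k x)\<bar>)" using i1 by auto
      show "integrable M (\<lambda>x. \<bar>g k x - s k x\<bar>)" using g[OF k] si[OF k] by auto
      show "\<bar>r x * (g k x - s k x)\<bar> \<le> \<bar>g k x - s k x\<bar>" for x
        by (rule rabs)
    qed
    also have "\<dots> \<le> e" using sa[OF k] by simp
    finally show ?thesis .
  qed
  have "\<forall>k<K. \<bar>\<integral>x. (indicator F x - 2 * indicator S x) * g k x \<partial>M\<bar> \<le> e"
    using bound unfolding r_def by blast
  then show ?thesis using S(1) SF by (intro bexI[of _ S] conjI)
qed

lemma abs_le_sq1: "\<bar>a::real\<bar> \<le> a\<^sup>2 + 1"
proof -
  have "0 \<le> (\<bar>a\<bar> - 1)\<^sup>2" by simp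
  moreover have "\<bar>a\<bar> * \<bar>a\<bar> = a * a" by (rule abs_mult_self_eq)
  ultimately show ?thesis by (simp add: power2_eq_square algebra_simps)
qed

lemma cs_ind:
  fixes g :: "'a \<Rightarrow> real"
  assumes mpos: "0 < measure M F" and Fs: "F \<in> sets M" and Ffin: "emeasure M F < \<infinity>"
    and i1: "integrable M (\<lambda>x. indicator F x * g x)" and i2: "integrable M (\<lambda>x. indicator F x * (g x)\<^sup>2)"
  shows "(\<integral>x. indicator F x * g x \<partial>M)\<^sup>2 \<le> measure M F * (\<integral>x. indicator F x * (g x)\<^sup>2 \<partial>M)"
proof -
  define b where "b = (\<integral>x. indicator F x * g x \<partial>M)"
  define a where "a = (\<integral>x. indicator F x * (g x)\<^sup>2 \<partial>M)"
  define m where "m = measure M F"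
  define c where "c = b / m"
  have i3: "integrable M (indicator F :: 'a \<Rightarrow> real)" using Fs Ffin by simp
  have pt: "indicator F x * (g x - c)\<^sup>2 = (indicator F x * (g x)\<^sup>2 - 2 * c * (indicator F x * g x)) + c\<^sup>2 * indicator F x" for x
    by (simp add: power2_eq_square algebra_simps)
  have "0 \<le> (\<integral>x. indicator F x * (g x - c)\<^sup>2 \<partial>M)"
    by (rule integral_nonneg_AE) auto
  also have "\<dots> = (\<integral>x. (indicator F x * (g x)\<^sup>2 - 2 * c * (indicator F x * g x)) + c\<^sup>2 * indicator F x \<partial>M)"
    unfolding pt ..
  also have "\<dots> = (\<integral>x. indicator F x * (g x)\<^sup>2 - 2 * c * (indicator F x * g x) \<partial>M) + (\<integral>x. c\<^sup>2 * indicator F x \<partial>M)"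
    using i1 i2 i3 by (intro Bochner_Integration.integral_add) auto
  also have "(\<integral>x. indicator F x * (g x)\<^sup>2 - 2 * c * (indicator F x * g x) \<partial>M) = a - (\<integral>x. 2 * c * (indicator F x * g x) \<partial>M)"
    unfolding a_def using i1 i2 by (intro Bochner_Integration.integral_diff) auto
  also have "(\<integral>x. 2 * c * (indicator F x * g x) \<partial>M) = 2 * c * b"
    unfolding b_def by (rule integral_mult_right_zero)
  also have "(\<integral>x. c\<^sup>2 * indicator F x \<partial>M) = c\<^sup>2 * m"
  proof -
    have "(\<integral>x. c\<^sup>2 * indicator F x \<partial>M) = c\<^sup>2 * (\<integral>x. indicator F x \<partial>M)" by (rule integral_mult_right_zero)
    also have "(\<integral>x. (indicator F x :: real) \<partial>M) = m"
      using Bochner_Integration.integral_indicator[of M F] sets.sets_into_space[OF Fs] unfolding m_def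
      by (simp add: Int_absorb2)
    finally show ?thesis .
  qed
  finally have "0 \<le> a - 2 * c * b + c\<^sup>2 * m" .
  moreover have "m > 0" using mpos m_def by simp
  ultimately have "0 \<le> m * (a - 2 * c * b + c\<^sup>2 * m)" by simp
  also have "m * (a - 2 * c * b + c\<^sup>2 * m) = m * a - b\<^sup>2"
    using \<open>m > 0\<close> unfolding c_def by (simp add: power2_eq_square field_simps)
  finally show ?thesis unfolding a_def b_def m_def by simp
qed

lemma core:
  fixes u :: "nat \<Rightarrow> 'a \<Rightarrow> real"
  assumes atl: "atomless M" and fr: "is_frame M u"
    and Ff: "F \<in> fmeasurable M" and Fpos: "0 < measure M F"
    and bd: "\<And>x. x \<in> F \<Longrightarrow> (\<Sum>k. ennreal ((neg_part (u k) x)\<^sup>2)) \<le> ennreal C"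
  shows False
proof -
  have fr1: "\<forall>k. u k \<in> L2R M" and fr2: "\<exists>A B. A > 0 \<and> B > 0 \<and> (\<forall>f \<in> L2R M.
        summable (\<lambda>k. \<bar>L2_inner M f (u k)\<bar>\<^sup>2) \<and>
        A * L2_normsq M f \<le> (\<Sum>k. \<bar>L2_inner M f (u k)\<bar>\<^sup>2) \<and>
        (\<Sum>k. \<bar>L2_inner M f (u k)\<bar>\<^sup>2) \<le> B * L2_normsq M f)"
    using fr unfolding is_frame_def by (rule conjunct1, rule conjunct2)
  from fr2 obtain A0 B0 where A0: "A0 > 0" and fb0: "\<forall>f \<in> L2R M.
        summable (\<lambda>k. \<bar>L2_inner M f (u k)\<bar>\<^sup>2) \<and>
        A0 * L2_normsq M f \<le> (\<Sum>k. \<bar>L2_inner M f (u k)\<bar>\<^sup>2) \<and>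
        (\<Sum>k. \<bar>L2_inner M f (u k)\<bar>\<^sup>2) \<le> B0 * L2_normsq M f"
    by (elim exE conjE)
  have fb: "summable (\<lambda>k. \<bar>L2_inner M f (u k)\<bar>\<^sup>2) \<and>
        A0 * L2_normsq M f \<le> (\<Sum>k. \<bar>L2_inner M f (u k)\<bar>\<^sup>2)" if "f \<in> L2R M" for f
    using fb0 that by blast
  have uL: "\<And>k. u k \<in> L2R M" using fr1 by blast
  have um[measurable]: "\<And>k. u k \<in> borel_measurable M" and ui: "\<And>k. integrable M (\<lambda>x. (u k x)\<^sup>2)"
    using uL unfolding L2R_def by auto
  have Fs[measurable]: "F \<in> sets M" using Ff by auto
  have Ffin: "emeasure M F < \<infinity>" using Ff by (simp add: fmeasurable_def)
  define m where "m = measure M F"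
  have mpos: "0 < m" using Fpos m_def by simp
  define w where "w k x = neg_part (u k) x" for k x
  have wm[measurable]: "\<And>k. w k \<in> borel_measurable M" unfolding w_def neg_part_def by measurable
  have w0: "0 \<le> w k x" and wu: "w k x \<le> \<bar>u k x\<bar>" and uw: "\<bar>u k x\<bar> = u k x + 2 * w k x" for k x
    unfolding w_def neg_part_def by (simp_all add: max_def abs_if)
  define iF :: "'a \<Rightarrow> real" where "iF = indicator F"
  have iFm[measurable]: "iF \<in> borel_measurable M" unfolding iF_def by measurable
  have iFi: "integrable M iF" unfolding iF_def using Fs Ffin by simp
  have iF01: "iF x = 0 \<or> iF x = 1" for x unfolding iF_def by (auto simp: indicator_def)
  have dom: "integrable M (\<lambda>x. (u k x)\<^sup>2 + iF x)" for k
    using ui iFi by (rule Bochner_Integration.integrable_add)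
  have I1: "integrable M (\<lambda>x. iF x * \<bar>u k x\<bar>)" for k
  proof (rule Bochner_Integration.integrable_bound[OF dom])
    show "(\<lambda>x. iF x * \<bar>u k x\<bar>) \<in> borel_measurable M" by measurable
    have "norm (iF x * \<bar>u k x\<bar>) \<le> norm ((u k x)\<^sup>2 + iF x)" for x
      using iF01[of x] abs_le_sq1[of "u k x"] by auto
    then show "AE x in M. norm (iF x * \<bar>u k x\<bar>) \<le> norm ((u k x)\<^sup>2 + iF x)" by simp
  qed
  have I2: "integrable M (\<lambda>x. iF x * u k x)" for k
  proof (rule Bochner_Integration.integrable_bound[OF I1])
    show "(\<lambda>x. iF x * u k x) \<in> borel_measurable M" by measurable
    show "AE x in M. norm (iF x * u k x) \<le> norm (iF x * \<bar>u k x\<bar>)"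
      using iF01 by (auto simp: abs_mult)
  qed
  have I3: "integrable M (\<lambda>x. iF x * w k x)" for k
  proof (rule Bochner_Integration.integrable_bound[OF I1])
    show "(\<lambda>x. iF x * w k x) \<in> borel_measurable M" by measurable
    have "norm (iF x * w k x) \<le> norm (iF x * \<bar>u k x\<bar>)" for x
      using iF01[of x] w0[of k x] wu[of k x] by auto
    then show "AE x in M. norm (iF x * w k x) \<le> norm (iF x * \<bar>u k x\<bar>)" by simp
  qed
  have I4: "integrable M (\<lambda>x. iF x * (w k x)\<^sup>2)" for k
  proof (rule Bochner_Integration.integrable_bound[OF ui])
    show "(\<lambda>x. iF x * (w k x)\<^sup>2) \<in> borel_measurable M" by measurable
    have "norm (iF x * (w k x)\<^sup>2) \<le> norm ((u k x)\<^sup>2)" for x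
    proof -
      have "(w k x)\<^sup>2 \<le> \<bar>u k x\<bar>\<^sup>2" using wu[of k x] w0[of k x] by (rule power_mono)
      then show ?thesis using iF01[of x] by auto
    qed
    then show "AE x in M. norm (iF x * (w k x)\<^sup>2) \<le> norm ((u k x)\<^sup>2)" by simp
  qed
  define a where "a k = (\<integral>x. iF x * (w k x)\<^sup>2 \<partial>M)" for k
  have a0: "0 \<le> a k" for k unfolding a_def by (rule integral_nonneg_AE) (auto simp: iF_def)
  have "(\<Sum>k. ennreal (a k)) = (\<Sum>k. \<integral>\<^sup>+x. ennreal (iF x * (w k x)\<^sup>2) \<partial>M)"
  proof (rule suminf_cong)
    fix k show "ennreal (a k) = (\<integral>\<^sup>+x. ennreal (iF x * (w k x)\<^sup>2) \<partial>M)"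
      unfolding a_def using I4[of k] by (subst nn_integral_eq_integral) (auto simp: iF_def)
  qed
  also have "\<dots> = (\<integral>\<^sup>+x. (\<Sum>k. ennreal (iF x * (w k x)\<^sup>2)) \<partial>M)"
    by (rule nn_integral_suminf[symmetric]) measurable
  also have "\<dots> \<le> (\<integral>\<^sup>+x. ennreal C * indicator F x \<partial>M)"
  proof (rule nn_integral_mono)
    fix x assume "x \<in> space M"
    show "(\<Sum>k. ennreal (iF x * (w k x)\<^sup>2)) \<le> ennreal C * indicator F x"
    proof (cases "x \<in> F")
      case True
      then show ?thesis using bd[OF True] unfolding iF_def w_def by simp
    next
      case False
      then show ?thesis unfolding iF_def by simp
    qed
  qed
  also have "\<dots> = ennreal C * emeasure M F" using Fs by (rule nn_integral_cmult_indicator)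
  also have "\<dots> < top" using Ffin by (simp add: ennreal_mult_less_top)
  finally have "(\<Sum>k. ennreal (a k)) \<noteq> top" by simp
  then have suma: "summable a" using a0 by (intro summable_suminf_not_top) auto
  define p where "p k = L2_inner M iF (u k)" for k
  have iFL: "iF \<in> L2R M"
  proof -
    have "(\<lambda>x. (iF x)\<^sup>2) = iF" unfolding iF_def by (auto simp: fun_eq_iff indicator_def)
    then show ?thesis unfolding L2R_def using iFi by simp
  qed
  have sump: "summable (\<lambda>k. (p k)\<^sup>2)" using fb[OF iFL] unfolding p_def by simp
  have p_eq: "p k = (\<integral>x. iF x * u k x \<partial>M)" for k unfolding p_def L2_inner_def ..
  define b where "b k = (\<integral>x. iF x * w k x \<partial>M)" for k
  have bcs: "(b k)\<^sup>2 \<le> m * a k" for k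
    unfolding b_def a_def m_def iF_def using cs_ind[OF Fpos Fs Ffin, of "w k"] I3[of k] I4[of k]
    unfolding iF_def by simp
  define d where "d k = (\<integral>x. iF x * \<bar>u k x\<bar> \<partial>M)" for k
  have d_eq: "d k = p k + 2 * b k" for k
  proof -
    have "d k = (\<integral>x. iF x * u k x + 2 * (iF x * w k x) \<partial>M)"
      unfolding d_def uw by (simp add: algebra_simps)
    also have "\<dots> = (\<integral>x. iF x * u k x \<partial>M) + (\<integral>x. 2 * (iF x * w k x) \<partial>M)"
      using I2 I3 by (intro Bochner_Integration.integral_add) auto
    also have "(\<integral>x. 2 * (iF x * w k x) \<partial>M) = 2 * b k" unfolding b_def by (rule integral_mult_right_zero)
    finally show ?thesis using p_eq by simp
  qed
  have dbound: "(d k)\<^sup>2 \<le> 2 * (p k)\<^sup>2 + 8 * (m * a k)" for k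
  proof -
    have "(d k)\<^sup>2 \<le> 2 * (p k)\<^sup>2 + 8 * (b k)\<^sup>2"
      unfolding d_eq using sum_squares_ge_zero[of "p k - 2 * b k" 0]
      by (simp add: power2_eq_square algebra_simps)
    then show ?thesis using bcs[of k] by simp
  qed
  have sumd: "summable (\<lambda>k. (d k)\<^sup>2)"
  proof (rule summable_comparison_test')
    show "summable (\<lambda>k. 2 * (p k)\<^sup>2 + 8 * (m * a k))"
      using sump suma by (intro summable_add summable_mult summable_mult2) auto
    show "norm ((d k)\<^sup>2) \<le> 2 * (p k)\<^sup>2 + 8 * (m * a k)" for k using dbound[of k] by simp
  qed
  obtain K where K: "\<And>n. n \<ge> K \<Longrightarrow> norm (\<Sum>i. (d (i + n))\<^sup>2) < A0 * m / 2"
    using suminf_exist_split[OF _ sumd, of "A0 * m / 2"] A0 mpos by auto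
  define e where "e = min 1 (A0 * m / (2 * (real K + 1)))"
  have e0: "0 < e" unfolding e_def using A0 mpos by simp
  have e1: "e \<le> 1" unfolding e_def by simp
  have eK: "real K * e < A0 * m / 2"
  proof -
    have "real K * e \<le> real K * (A0 * m / (2 * (real K + 1)))"
      unfolding e_def by (intro mult_left_mono) auto
    also have "\<dots> < A0 * m / 2"
      using A0 mpos by (simp add: field_simps)
    finally show ?thesis .
  qed
  obtain S where S: "S \<in> sets M" "S \<subseteq> F"
    and Sb: "\<And>k. k < K \<Longrightarrow> \<bar>\<integral>x. (indicator F x - 2 * indicator S x) * (iF x * u k x) \<partial>M\<bar> \<le> e"
    using approx_orth[OF atl Ff, of K "\<lambda>k x. iF x * u k x" e] I2 e0 by blast
  define r :: "'a \<Rightarrow> real" where "r x = indicator F x - 2 * indicator S x" for x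
  have rm[measurable]: "r \<in> borel_measurable M" unfolding r_def using S(1) by measurable
  have r_iF: "r x * (iF x * y) = r x * y" for x y
    unfolding r_def iF_def using S(2) by (auto simp: indicator_def)
  have rsq: "(r x)\<^sup>2 = iF x" for x
    unfolding r_def iF_def using S(2) by (auto simp: indicator_def)
  have rabs: "\<bar>r x * y\<bar> \<le> iF x * \<bar>y\<bar>" for x y
    unfolding r_def iF_def using S(2) by (auto simp: indicator_def abs_mult)
  have rL: "r \<in> L2R M" unfolding L2R_def using iFi rsq by simp
  have rn: "L2_normsq M r = m"
  proof -
    have "L2_normsq M r = (\<integral>x. iF x \<partial>M)" unfolding L2_normsq_def rsq ..
    also have "\<dots> = m" unfolding iF_def m_def
      using Bochner_Integration.integral_indicator[of M F] sets.sets_into_space[OF Fs]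
      by (simp add: Int_absorb2)
    finally show ?thesis .
  qed
  define f where "f k = \<bar>L2_inner M r (u k)\<bar>\<^sup>2" for k
  have sumf: "summable f" and lower: "A0 * m \<le> (\<Sum>k. f k)"
    using fb[OF rL] rn unfolding f_def by auto
  have ru_int: "integrable M (\<lambda>x. r x * u k x)" for k
  proof (rule Bochner_Integration.integrable_bound[OF I1])
    show "(\<lambda>x. r x * u k x) \<in> borel_measurable M" by measurable
    have "norm (r x * u k x) \<le> norm (iF x * \<bar>u k x\<bar>)" for x
    proof -
      have "\<bar>iF x\<bar> = iF x" using iF01[of x] by auto
      then show ?thesis using rabs[of x "u k x"] by (simp add: abs_mult)
    qed
    then show "AE x in M. norm (r x * u k x) \<le> norm (iF x * \<bar>u k x\<bar>)" by simp
  qed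
  have fd: "f k \<le> (d k)\<^sup>2" for k
  proof -
    have "\<bar>L2_inner M r (u k)\<bar> \<le> (\<integral>x. \<bar>r x * u k x\<bar> \<partial>M)"
      unfolding L2_inner_def using integral_abs_bound[of M "\<lambda>x. r x * u k x"] by simp
    also have "\<dots> \<le> d k" unfolding d_def
      using ru_int I1 rabs by (intro integral_mono) auto
    finally have "\<bar>L2_inner M r (u k)\<bar> \<le> d k" .
    then show ?thesis unfolding f_def by (intro power_mono) auto
  qed
  have fe: "f k \<le> e" if k: "k < K" for k
  proof -
    have "\<bar>\<integral>x. r x * (iF x * u k x) \<partial>M\<bar> \<le> e"
      using Sb[OF k] unfolding r_def .
    moreover have "(\<lambda>x. r x * (iF x * u k x)) = (\<lambda>x. r x * u k x)"
      by (rule ext, rule r_iF)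
    ultimately have "\<bar>L2_inner M r (u k)\<bar> \<le> e"
      unfolding L2_inner_def by simp
    then have "f k \<le> e\<^sup>2" unfolding f_def by (intro power_mono) auto
    also have "e\<^sup>2 \<le> e" using e0 e1 by (simp add: power2_eq_square mult_left_le_one_le)
    finally show ?thesis .
  qed
  have "(\<Sum>k. f k) = (\<Sum>i. f (i + K)) + (\<Sum>i<K. f i)"
    by (rule suminf_split_initial_segment[OF sumf])
  also have "(\<Sum>i<K. f i) \<le> (\<Sum>i<K. e)" using fe by (intro sum_mono) auto
  also have "(\<Sum>i<K. e) = real K * e" by simp
  also have "(\<Sum>i. f (i + K)) \<le> (\<Sum>i. (d (i + K))\<^sup>2)"
  proof (rule suminf_le)
    show "summable (\<lambda>i. f (i + K))" using sumf by (rule summable_ignore_initial_segment)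
    show "summable (\<lambda>i. (d (i + K))\<^sup>2)" using sumd by (rule summable_ignore_initial_segment)
  qed (rule fd)
  also have "(\<Sum>i. (d (i + K))\<^sup>2) < A0 * m / 2" using K[of K] by simp
  finally have "(\<Sum>k. f k) < A0 * m / 2 + real K * e" by simp
  with lower eK show False by simp
qed

lemma neg_AE:
  fixes u :: "nat \<Rightarrow> 'a \<Rightarrow> real"
  assumes sf: "sigma_finite_measure M" and atl: "atomless M" and fr: "is_frame M u"
  shows "AE x in M. (\<Sum>k. ennreal ((neg_part (u k) x)\<^sup>2)) = \<infinity>"
proof -
  have "\<forall>k. u k \<in> L2R M" using fr unfolding is_frame_def by (rule conjunct1)
  then have um[measurable]: "\<And>k. u k \<in> borel_measurable M" unfolding L2R_def by blast
  define \<Phi> where "\<Phi> x = (\<Sum>k. ennreal ((neg_part (u k) x)\<^sup>2))" for x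
  have \<Phi>m[measurable]: "\<Phi> \<in> borel_measurable M" unfolding \<Phi>_def neg_part_def by measurable
  define E where "E = {x\<in>space M. \<Phi> x \<noteq> \<infinity>}"
  have Es: "E \<in> sets M" unfolding E_def by measurable
  show ?thesis
  proof (rule ccontr)
    assume nAE: "\<not> (AE x in M. (\<Sum>k. ennreal ((neg_part (u k) x)\<^sup>2)) = \<infinity>)"
    have "(AE x in M. \<Phi> x = \<infinity>) \<longleftrightarrow> emeasure M E = 0"
      by (rule AE_iff_measurable[OF Es]) (auto simp: E_def)
    then have E0: "emeasure M E \<noteq> 0" using nAE unfolding \<Phi>_def by simp
    obtain \<Omega> :: "nat \<Rightarrow> 'a set" where \<Omega>: "range \<Omega> \<subseteq> sets M" "(\<Union>i. \<Omega> i) = space M"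
      "\<And>i. emeasure M (\<Omega> i) \<noteq> \<infinity>" "incseq \<Omega>"
      using sigma_finite_measure.sigma_finite_incseq[OF sf] by blast
    have \<Omega>s[measurable]: "\<And>n. \<Omega> n \<in> sets M" using \<Omega>(1) by auto
    define G where "G n = {x\<in>space M. x \<in> \<Omega> n \<and> \<Phi> x \<le> of_nat n}" for n
    have Gs: "G n \<in> sets M" for n unfolding G_def by measurable
    have incG: "incseq G"
    proof (rule incseq_SucI)
      fix n show "G n \<subseteq> G (Suc n)"
      proof
        fix x assume "x \<in> G n"
        then have x: "x \<in> space M" "x \<in> \<Omega> n" "\<Phi> x \<le> of_nat n" unfolding G_def by auto
        have "\<Omega> n \<subseteq> \<Omega> (Suc n)" using \<Omega>(4) by (simp add: incseq_Suc_iff)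
        moreover have "(of_nat n :: ennreal) \<le> of_nat (Suc n)" by simp
        ultimately show "x \<in> G (Suc n)" unfolding G_def using x order_trans by blast
      qed
    qed
    have UG: "(\<Union>n. G n) = E"
    proof
      show "(\<Union>n. G n) \<subseteq> E"
      proof
        fix x assume "x \<in> (\<Union>n. G n)"
        then obtain n where "x \<in> space M" "\<Phi> x \<le> of_nat n" unfolding G_def by blast
        moreover have "(of_nat n :: ennreal) < \<infinity>" using of_nat_less_top[of n] by simp
        ultimately show "x \<in> E" unfolding E_def by auto
      qed
      show "E \<subseteq> (\<Union>n. G n)"
      proof
        fix x assume "x \<in> E"
        then have x: "x \<in> space M" "\<Phi> x < \<infinity>" unfolding E_def by (auto simp: less_top)
        obtain n1 where n1: "\<Phi> x < of_nat n1" using ennreal_Ex_less_of_nat[of "\<Phi> x"] x(2) by auto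
        obtain n2 where n2: "x \<in> \<Omega> n2" using x(1) \<Omega>(2) by blast
        define n where "n = max n1 n2"
        have "\<Omega> n2 \<subseteq> \<Omega> n" using \<Omega>(4) unfolding n_def incseq_def by simp
        moreover have "(of_nat n1 :: ennreal) \<le> of_nat n" unfolding n_def by simp
        ultimately have "x \<in> G n" unfolding G_def using x n1 n2 by (auto intro: order_trans less_imp_le)
        then show "x \<in> (\<Union>n. G n)" by blast
      qed
    qed
    have "(SUP n. emeasure M (G n)) = emeasure M E"
      using SUP_emeasure_incseq[of G M] Gs incG UG by auto
    then have "0 < (SUP n. emeasure M (G n))" using E0 by (simp add: zero_less_iff_neq_zero)
    then obtain n where n: "0 < emeasure M (G n)" by (auto simp: less_SUP_iff)
    have GO: "G n \<subseteq> \<Omega> n" unfolding G_def by blast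
    have Of: "\<Omega> n \<in> fmeasurable M" using \<Omega>(3)[of n] by (intro fmeasurableI) (auto simp: less_top)
    have Gf: "G n \<in> fmeasurable M" by (rule fmeasurableI2[OF Of GO Gs])
    have Gpos: "0 < measure M (G n)" using n Gf by (simp add: emeasure_eq_measure2)
    have bd: "\<Phi> x \<le> ennreal (real n)" if "x \<in> G n" for x
      using that unfolding G_def by (simp add: ennreal_of_nat_eq_real_of_nat)
    show False
      by (rule core[OF atl fr Gf Gpos, of "real n"]) (use bd in \<open>auto simp: \<Phi>_def\<close>)
  qed
qed

theorem theorem1p1:
  fixes M :: "'a measure" and u :: "nat \<Rightarrow> 'a \<Rightarrow> real"
  assumes "sigma_finite_measure M"
    and "atomless M"
    and "is_frame M u"
  shows "(AE x in M. (\<Sum>k. ennreal ((pos_part (u k) x)\<^sup>2)) = \<infinity> \<and>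
                     (\<Sum>k. ennreal ((neg_part (u k) x)\<^sup>2)) = \<infinity>)
         \<and> (emeasure M (space M) > 0 \<longrightarrow> \<not> (\<forall>k. AE x in M. u k x \<ge> 0))"
proof -
  note sf = assms(1) and atl = assms(2) and fr = assms(3)
  define v where "v k x = - u k x" for k x
  have inner: "L2_inner M f (v k) = - L2_inner M f (u k)" for f k
    unfolding L2_inner_def v_def by simp
  have vL: "v k \<in> L2R M" if "u k \<in> L2R M" for k
  proof -
    have "u k \<in> borel_measurable M" "integrable M (\<lambda>x. (u k x)\<^sup>2)" using that unfolding L2R_def by auto
    then show ?thesis unfolding L2R_def v_def by auto
  qed
  have frv: "is_frame M v"
    using fr vL unfolding is_frame_def by (simp add: inner)
  have pos: "AE x in M. (\<Sum>k. ennreal ((pos_part (u k) x)\<^sup>2)) = \<infinity>"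
  proof -
    have "AE x in M. (\<Sum>k. ennreal ((neg_part (v k) x)\<^sup>2)) = \<infinity>" by (rule neg_AE[OF sf atl frv])
    moreover have "neg_part (v k) x = pos_part (u k) x" for k x
      unfolding neg_part_def pos_part_def v_def by simp
    ultimately show ?thesis by simp
  qed
  have neg: "AE x in M. (\<Sum>k. ennreal ((neg_part (u k) x)\<^sup>2)) = \<infinity>" by (rule neg_AE[OF sf atl fr])
  have part1: "AE x in M. (\<Sum>k. ennreal ((pos_part (u k) x)\<^sup>2)) = \<infinity> \<and>
                     (\<Sum>k. ennreal ((neg_part (u k) x)\<^sup>2)) = \<infinity>"
    using pos neg by (rule eventually_conj)
  have part2: "\<not> (\<forall>k. AE x in M. u k x \<ge> 0)" if sp: "emeasure M (space M) > 0"
  proof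
    assume "\<forall>k. AE x in M. u k x \<ge> 0"
    then have "AE x in M. \<forall>k. u k x \<ge> 0" by (simp add: AE_all_countable)
    then have "AE x in M. (\<Sum>k. ennreal ((neg_part (u k) x)\<^sup>2)) = 0"
    proof (rule AE_mp[OF _ AE_I2], intro impI)
      fix x assume "\<forall>k. u k x \<ge> 0"
      then have "\<And>k. neg_part (u k) x = 0" unfolding neg_part_def by simp
      then show "(\<Sum>k. ennreal ((neg_part (u k) x)\<^sup>2)) = 0" by simp
    qed
    with neg have "AE x in M. False" by (rule AE_mp[OF _ AE_mp[OF _ AE_I2]]) auto
    then have "ae_filter M = bot" by (simp add: eventually_False)
    then have "emeasure M (space M) = 0" by (simp add: ae_filter_eq_bot_iff)
    then show False using sp by simp
  qed
  show ?thesis using part1 part2 by blast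
qed


end
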